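(* Let $k\ge 3$, $n_1,\dots,n_k\ge 2$ and $r\in[k]$. The LC orbit of the clique-star $CS^r_{n_1,\dots,n_k}$ has size $$|\mathcal{O}(CS^r_{n_1,\dots,n_k})|=\sum_{\substack{I\subseteq[k]\\ |I|\text{ odd}}}\prod_{i\in I}n_i+\sum_{j=1}^k\prod_{i\in[k]\setminus\{j\}}(n_i+1).$$
   Context: $[k]=\{1,\dots,k\}$. The clique-star $CS^r_{n_1,\dots,n_k}$ has vertex set $U_1\sqcup\cdots\sqcup U_k$ with $|U_i|=n_i$; each $U_i$ is a clique, every vertex of $U_r$ is adjacent to every vertex of $U_i$ for all $i\ne r$, and there are no edges between $U_i$ and $U_l$ for distinct $i,l\ne r$. The local complement $c_v(G)$ complements the edges among the neighbours of $v$. $\mathcal{O}(G)$ is the set of all graphs on the labelled vertex set $V(G)$ obtainable from $G$ by finite sequences of local complements (labelled graphs are counted). *)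

theory Defs
  imports Main
begin

text \<open>Simple graphs on a vertex set V are represented by their edge set:
  a set of 2-element subsets of V.\<close>

definition nbhd :: "'a set set \<Rightarrow> 'a \<Rightarrow> 'a set" where
  "nbhd E v = {u. {u, v} \<in> E \<and> u \<noteq> v}"

definition local_comp :: "'a set set \<Rightarrow> 'a \<Rightarrow> 'a set set" where
  "local_comp E v =
     (E - {{x, y} | x y. x \<in> nbhd E v \<and> y \<in> nbhd E v \<and> x \<noteq> y})
     \<union> ({{x, y} | x y. x \<in> nbhd E v \<and> y \<in> nbhd E v \<and> x \<noteq> y} - E)"

inductive_set lc_orbit :: "'a set \<Rightarrow> 'a set set \<Rightarrow> 'a set set set"
  for V :: "'a set" and E :: "'a set set" where
  refl: "E \<in> lc_orbit V E"
| step: "F \<in> lc_orbit V E \<Longrightarrow> v \<in> V \<Longrightarrow> local_comp F v \<in> lc_orbit V E"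

text \<open>Clique-star CS^r_{n_1..n_k}: vertices (i,a) with i \<in> {1..k}, a < n i,
  U_i = {(i,a) | a < n i}.\<close>
definition cs_vertices :: "nat \<Rightarrow> (nat \<Rightarrow> nat) \<Rightarrow> (nat \<times> nat) set" where
  "cs_vertices k n = {(i, a). i \<in> {1..k} \<and> a < n i}"

definition clique_star :: "nat \<Rightarrow> (nat \<Rightarrow> nat) \<Rightarrow> nat \<Rightarrow> (nat \<times> nat) set set" where
  "clique_star k n r =
     {{x, y} | x y. x \<in> cs_vertices k n \<and> y \<in> cs_vertices k n \<and> x \<noteq> y \<and>
        (fst x = fst y \<or> fst x = r \<or> fst y = r)}"

end

theory Submission imports Defs "HOL-Library.FuncSet" begin

definition gE :: "'a set \<Rightarrow> ('a \<Rightarrow> 'a \<Rightarrow> bool) \<Rightarrow> 'a set set" where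
  "gE V R = {{x, y} | x y. x \<in> V \<and> y \<in> V \<and> x \<noteq> y \<and> R x y}"

definition symr :: "('a \<Rightarrow> 'a \<Rightarrow> bool) \<Rightarrow> bool" where
  "symr R \<longleftrightarrow> (\<forall>x y. R x y = R y x)"

lemma gE_cong:
  assumes "\<And>x y. x \<in> V \<Longrightarrow> y \<in> V \<Longrightarrow> x \<noteq> y \<Longrightarrow> R x y = R' x y"
  shows "gE V R = gE V R'"
  unfolding gE_def using assms by blast

lemma mem_gE:
  assumes "symr R" "x \<noteq> y"
  shows "{x, y} \<in> gE V R \<longleftrightarrow> x \<in> V \<and> y \<in> V \<and> R x y"
  using assms unfolding gE_def symr_def by (auto simp: doubleton_eq_iff)

lemma gE_elem: "e \<in> gE V R \<Longrightarrow> \<exists>x y. e = {x, y} \<and> x \<noteq> y"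
  unfolding gE_def by blast

lemma nbhd_gE:
  assumes "symr R"
  shows "nbhd (gE V R) v = {u. u \<in> V \<and> v \<in> V \<and> u \<noteq> v \<and> R u v}"
  using mem_gE[OF assms] unfolding nbhd_def by auto

lemma lc_gE:
  assumes "symr R"
  shows "local_comp (gE V R) v = gE V (\<lambda>x y. R x y \<noteq> (R x v \<and> R y v \<and> x \<noteq> v \<and> y \<noteq> v \<and> v \<in> V))"
    (is "?L = gE V ?R")
proof -
  have sR: "symr ?R" using assms unfolding symr_def by blast
  let ?N = "nbhd (gE V R) v"
  let ?B = "{{x, y} | x y. x \<in> ?N \<and> y \<in> ?N \<and> x \<noteq> y}"
  have N: "?N = {u. u \<in> V \<and> v \<in> V \<and> u \<noteq> v \<and> R u v}" by (rule nbhd_gE[OF assms])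
  have B: "\<And>x y. x \<noteq> y \<Longrightarrow> {x,y} \<in> ?B \<longleftrightarrow> x \<in> ?N \<and> y \<in> ?N"
    by (auto simp: doubleton_eq_iff)
  show ?thesis
  proof (rule set_eqI)
    fix e
    show "e \<in> ?L \<longleftrightarrow> e \<in> gE V ?R"
    proof (cases "\<exists>x y. e = {x, y} \<and> x \<noteq> y")
      case True
      then obtain x y where e: "e = {x,y}" "x \<noteq> y" by blast
      show ?thesis unfolding local_comp_def e(1) using mem_gE[OF assms e(2)] mem_gE[OF sR e(2)] B[OF e(2)] N
        using assms unfolding symr_def by auto
    next
      case False
      then show ?thesis unfolding local_comp_def using gE_elem by blast
    qed
  qed
qed

datatype st = Kc | Ec | Sc nat

fun inner :: "st \<Rightarrow> nat \<Rightarrow> nat \<Rightarrow> bool" where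
  "inner Kc a b = True" | "inner Ec a b = False" | "inner (Sc c) a b = (a = c \<or> b = c)"
fun att :: "st \<Rightarrow> nat \<Rightarrow> bool" where
  "att (Sc c) a = (a = c)" | "att Kc a = True" | "att Ec a = True"
fun flip :: "st \<Rightarrow> st" where
  "flip Kc = Ec" | "flip Ec = Kc" | "flip (Sc c) = Sc c"
fun nst :: "st \<Rightarrow> nat \<Rightarrow> st" where
  "nst Kc a = Sc a" | "nst Ec a = Ec" | "nst (Sc c) a = Kc"
fun ctr :: "st \<Rightarrow> nat" where
  "ctr (Sc c) = c" | "ctr Kc = 0" | "ctr Ec = 0"

definition Rc :: "(nat \<Rightarrow> nat \<Rightarrow> bool) \<Rightarrow> (nat \<Rightarrow> st) \<Rightarrow> nat \<times> nat \<Rightarrow> nat \<times> nat \<Rightarrow> bool" where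
  "Rc H s x y = (if fst x = fst y then inner (s (fst x)) (snd x) (snd y)
     else H (fst x) (fst y) \<and> att (s (fst x)) (snd x) \<and> att (s (fst y)) (snd y))"

lemma inner_sym: "inner t a b = inner t b a" by (cases t) auto

lemma symr_Rc: "symr H \<Longrightarrow> symr (Rc H s)"
  unfolding symr_def Rc_def using inner_sym by metis

lemma lc_act:
  assumes "symr H" "(i, a) \<in> V" "s i = Kc \<or> s i = Ec \<or> s i = Sc a"
  shows "local_comp (gE V (Rc H s)) (i, a) =
    gE V (Rc (\<lambda>l m. H l m \<noteq> (H i l \<and> H i m \<and> l \<noteq> i \<and> m \<noteq> i))
             (\<lambda>l. if l = i then nst (s i) a else if H i l then flip (s l) else s l))"
  unfolding lc_gE[OF symr_Rc[OF assms(1)]]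
proof (rule gE_cong)
  fix x y assume "x \<in> V" "y \<in> V" "x \<noteq> y"
  obtain l b m b' where xy: "x = (l, b)" "y = (m, b')" by fastforce
  have Hs: "\<And>p q. H p q = H q p" using assms(1) unfolding symr_def by blast
  show "(Rc H s x y \<noteq> (Rc H s x (i, a) \<and> Rc H s y (i, a) \<and> x \<noteq> (i, a) \<and> y \<noteq> (i, a) \<and> (i, a) \<in> V)) =
    Rc (\<lambda>l m. H l m \<noteq> (H i l \<and> H i m \<and> l \<noteq> i \<and> m \<noteq> i))
             (\<lambda>l. if l = i then nst (s i) a else if H i l then flip (s l) else s l) x y"
    using assms(2,3) \<open>x \<noteq> y\<close> unfolding xy Rc_def
    apply (cases "s i"; cases "s l"; cases "s m")
    by (auto simp: Hs)
qed

lemma lc_act':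
  assumes "symr H" "(i, a) \<in> V" "s i = Kc \<or> s i = Ec \<or> s i = Sc a"
    and "\<And>l m. H' l m = (H l m \<noteq> (H i l \<and> H i m \<and> l \<noteq> i \<and> m \<noteq> i))"
    and "\<And>l. s' l = (if l = i then nst (s i) a else if H i l then flip (s l) else s l)"
  shows "local_comp (gE V (Rc H s)) (i, a) = gE V (Rc H' s')"
proof -
  have "H' = (\<lambda>l m. H l m \<noteq> (H i l \<and> H i m \<and> l \<noteq> i \<and> m \<noteq> i))"
       "s' = (\<lambda>l. if l = i then nst (s i) a else if H i l then flip (s l) else s l)"
    using assms(4,5) by (intro ext; simp)+
  then show ?thesis using lc_act[where H=H and s=s and i=i and a=a and V=V] assms(1-3) by simp
qed

lemma lc_pass:
  assumes "symr H" "s i = Sc c" "c \<noteq> a"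
  shows "local_comp (gE V (Rc H s)) (i, a) = gE V (Rc H s)"
  unfolding lc_gE[OF symr_Rc[OF assms(1)]]
proof (rule gE_cong)
  fix x y assume "x \<in> V" "y \<in> V" "x \<noteq> y"
  obtain l b m b' where xy: "x = (l, b)" "y = (m, b')" by fastforce
  show "(Rc H s x y \<noteq> (Rc H s x (i, a) \<and> Rc H s y (i, a) \<and> x \<noteq> (i, a) \<and> y \<noteq> (i, a) \<and> (i, a) \<in> V)) = Rc H s x y"
    using assms \<open>x \<noteq> y\<close> unfolding xy Rc_def by (cases "s l"; cases "s m") auto
qed


context
  fixes k :: nat and n :: "nat \<Rightarrow> nat"
begin

definition gr :: "(nat \<Rightarrow> nat \<Rightarrow> bool) \<Rightarrow> (nat \<Rightarrow> st) \<Rightarrow> (nat \<times> nat) set set" where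
  "gr H s = gE (cs_vertices k n) (Rc H s)"

definition cnt :: "nat \<Rightarrow> (nat \<Rightarrow> st) \<Rightarrow> nat" where
  "cnt j f = card {l \<in> {1..k} - {j}. f l \<noteq> Kc}"

definition starS :: "nat \<Rightarrow> (nat \<Rightarrow> st) \<Rightarrow> nat \<Rightarrow> st" where
  "starS j f = (\<lambda>l. if l = j then (if even (cnt j f) then Kc else Ec) else f l)"

definition gS :: "nat \<Rightarrow> (nat \<Rightarrow> st) \<Rightarrow> (nat \<times> nat) set set" where
  "gS j f = gr (\<lambda>l m. l = j \<or> m = j) (starS j f)"

definition compS :: "nat set \<Rightarrow> (nat \<Rightarrow> nat) \<Rightarrow> nat \<Rightarrow> st" where
  "compS I c = (\<lambda>l. if l \<in> I then Sc (c l) else Ec)"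

definition gC :: "nat set \<Rightarrow> (nat \<Rightarrow> nat) \<Rightarrow> (nat \<times> nat) set set" where
  "gC I c = gr (\<lambda>_ _. True) (compS I c)"

definition okS :: "nat \<Rightarrow> (nat \<Rightarrow> st) \<Rightarrow> bool" where
  "okS j f \<longleftrightarrow> j \<in> {1..k} \<and> (\<forall>l\<in>{1..k}-{j}. f l = Kc \<or> (\<exists>c<n l. f l = Sc c))"

definition okC :: "nat set \<Rightarrow> (nat \<Rightarrow> nat) \<Rightarrow> bool" where
  "okC I c \<longleftrightarrow> I \<subseteq> {1..k} \<and> odd (card I) \<and> (\<forall>i\<in>I. c i < n i)"

definition GG :: "(nat \<times> nat) set set set" where
  "GG = {gS j f | j f. okS j f} \<union> {gC I c | I c. okC I c}"

lemma symr_star: "symr (\<lambda>l m. l = j \<or> m = j)" unfolding symr_def by blast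
lemma symr_comp: "symr (\<lambda>l m. True)" unfolding symr_def by blast

lemma gr_cong:
  assumes "\<And>l m. l \<in> {1..k} \<Longrightarrow> m \<in> {1..k} \<Longrightarrow> l \<noteq> m \<Longrightarrow> H l m = H' l m"
    and "\<And>l. l \<in> {1..k} \<Longrightarrow> s l = s' l"
  shows "gr H s = gr H' s'"
  unfolding gr_def
proof (rule gE_cong)
  fix x y assume "x \<in> cs_vertices k n" "y \<in> cs_vertices k n" "x \<noteq> y"
  then have "fst x \<in> {1..k}" "fst y \<in> {1..k}" unfolding cs_vertices_def by auto
  then show "Rc H s x y = Rc H' s' x y" unfolding Rc_def using assms by auto
qed

lemma case1:
  assumes "okS j f" "a < n j"
  shows "local_comp (gS j f) (j, a) =
     gC ({l \<in> {1..k} - {j}. f l \<noteq> Kc} \<union> (if even (cnt j f) then {j} else {}))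
        (\<lambda>l. if l = j then a else ctr (f l))"
    and "okC ({l \<in> {1..k} - {j}. f l \<noteq> Kc} \<union> (if even (cnt j f) then {j} else {}))
        (\<lambda>l. if l = j then a else ctr (f l))"
proof -
  have v: "(j, a) \<in> cs_vertices k n" using assms unfolding okS_def cs_vertices_def by auto
  have act: "starS j f j = Kc \<or> starS j f j = Ec \<or> starS j f j = Sc a" unfolding starS_def by auto
  have "local_comp (gS j f) (j, a) = gr (\<lambda>l m. (l = j \<or> m = j) \<noteq> (l \<noteq> j \<and> m \<noteq> j))
             (\<lambda>l. if l = j then nst (starS j f j) a else flip (starS j f l))"
    unfolding gS_def gr_def using v act by (intro lc_act' symr_star) auto
  also have "\<dots> = gC ({l \<in> {1..k} - {j}. f l \<noteq> Kc} \<union> (if even (cnt j f) then {j} else {}))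
        (\<lambda>l. if l = j then a else ctr (f l))"
    unfolding gC_def
  proof (rule gr_cong)
    fix l assume l: "l \<in> {1..k}"
    show "(if l = j then nst (starS j f j) a else flip (starS j f l)) =
         compS ({l \<in> {1..k} - {j}. f l \<noteq> Kc} \<union> (if even (cnt j f) then {j} else {}))
          (\<lambda>l. if l = j then a else ctr (f l)) l"
      using assms(1) l unfolding compS_def starS_def okS_def
      by (cases "l = j"; cases "f l") (auto dest: bspec[where x=l])
  qed auto
  finally show "local_comp (gS j f) (j, a) =
     gC ({l \<in> {1..k} - {j}. f l \<noteq> Kc} \<union> (if even (cnt j f) then {j} else {}))
        (\<lambda>l. if l = j then a else ctr (f l))" .
  define T where "T = {l \<in> {1..k} - {j}. f l \<noteq> Kc}"
  have T: "finite T" "j \<notin> T" "cnt j f = card T" unfolding T_def cnt_def by auto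
  have "odd (card (T \<union> (if even (cnt j f) then {j} else {})))"
    using T by (cases "even (card T)") auto
  moreover have "T \<union> (if even (cnt j f) then {j} else {}) \<subseteq> {1..k}"
    using assms(1) unfolding T_def okS_def by auto
  moreover have "(if i = j then a else ctr (f i)) < n i" if "i \<in> T \<union> (if even (cnt j f) then {j} else {})" for i
  proof (cases "i = j")
    case False
    then have "i \<in> {1..k} - {j}" "f i \<noteq> Kc" using that unfolding T_def by (auto split: if_splits)
    then obtain c where "c < n i" "f i = Sc c" using assms(1) unfolding okS_def by blast
    then show ?thesis using False by simp
  qed (use assms in simp)
  ultimately show "okC ({l \<in> {1..k} - {j}. f l \<noteq> Kc} \<union> (if even (cnt j f) then {j} else {}))
        (\<lambda>l. if l = j then a else ctr (f l))"
    unfolding okC_def T_def by blast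
qed

lemma cnt_upd:
  assumes "i \<in> {1..k} - {j}" "f i = Kc" "g i \<noteq> Kc" "\<And>l. l \<noteq> i \<Longrightarrow> f l = g l"
  shows "even (cnt j g) \<longleftrightarrow> odd (cnt j f)" "even (cnt j f) \<longleftrightarrow> odd (cnt j g)"
proof -
  have "{l \<in> {1..k} - {j}. g l \<noteq> Kc} = insert i {l \<in> {1..k} - {j}. f l \<noteq> Kc}"
  proof (rule set_eqI)
    fix x show "x \<in> {l \<in> {1..k} - {j}. g l \<noteq> Kc} \<longleftrightarrow> x \<in> insert i {l \<in> {1..k} - {j}. f l \<noteq> Kc}"
      using assms(1-3) assms(4)[of x] by (cases "x = i") auto
  qed
  moreover have "i \<notin> {l \<in> {1..k} - {j}. f l \<noteq> Kc}" using assms by auto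
  ultimately have "cnt j g = Suc (cnt j f)" unfolding cnt_def by simp
  then show "even (cnt j g) \<longleftrightarrow> odd (cnt j f)" "even (cnt j f) \<longleftrightarrow> odd (cnt j g)" by auto
qed

lemma case2:
  assumes "okS j f" "i \<in> {1..k}" "i \<noteq> j" "a < n i" "f i = Kc \<or> f i = Sc a"
  shows "local_comp (gS j f) (i, a) = gS j (f(i := nst (f i) a))"
    and "okS j (f(i := nst (f i) a))"
proof -
  have v: "(i, a) \<in> cs_vertices k n" using assms unfolding cs_vertices_def by auto
  have act: "starS j f i = Kc \<or> starS j f i = Ec \<or> starS j f i = Sc a" using assms unfolding starS_def by auto
  have par: "even (cnt j (f(i := nst (f i) a))) \<longleftrightarrow> odd (cnt j f)"
  proof (cases "f i = Kc")
    case True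
    then show ?thesis using cnt_upd(1)[of i j f "f(i := nst (f i) a)"] assms(2,3) by auto
  next
    case False
    then have "f i = Sc a" using assms(5) by simp
    then show ?thesis using cnt_upd(2)[of i j "f(i := nst (f i) a)" f] assms(2,3) by auto
  qed
  have "local_comp (gS j f) (i, a) = gr (\<lambda>l m. (l = j \<or> m = j) \<noteq> (l = j \<and> m = j))
             (\<lambda>l. if l = i then nst (f i) a else if l = j then flip (starS j f j) else starS j f l)"
    unfolding gS_def gr_def using v act assms(3) by (intro lc_act' symr_star) (auto simp: starS_def)
  also have "\<dots> = gS j (f(i := nst (f i) a))"
    unfolding gS_def
  proof (rule gr_cong)
    fix l assume l: "l \<in> {1..k}"
    show "(if l = i then nst (f i) a else if l = j then flip (starS j f j) else starS j f l) =
         starS j (f(i := nst (f i) a)) l"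
      using assms(3) par unfolding starS_def by auto
  qed auto
  finally show "local_comp (gS j f) (i, a) = gS j (f(i := nst (f i) a))" .
  show "okS j (f(i := nst (f i) a))"
    using assms unfolding okS_def by auto
qed

lemma case5:
  assumes "okC I c" "i \<in> {1..k}" "a < n i" "i \<notin> I \<or> a = c i"
  shows "local_comp (gC I c) (i, a) = gS i (\<lambda>l. if l \<in> I then Sc (c l) else Kc)"
    and "okS i (\<lambda>l. if l \<in> I then Sc (c l) else Kc)"
proof -
  have v: "(i, a) \<in> cs_vertices k n" using assms unfolding cs_vertices_def by auto
  have act: "compS I c i = Kc \<or> compS I c i = Ec \<or> compS I c i = Sc a" using assms unfolding compS_def by auto
  have cntI: "cnt i (\<lambda>l. if l \<in> I then Sc (c l) else Kc) = card (I - {i})"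
    unfolding cnt_def using assms(1) unfolding okC_def by (intro arg_cong[where f=card]) auto
  have fin: "finite I" using assms(1) unfolding okC_def by (auto intro: finite_subset)
  have par: "even (card (I - {i})) \<longleftrightarrow> i \<in> I"
    using assms(1) fin unfolding okC_def by (cases "i \<in> I") (auto simp: card_Diff_singleton)
  have "local_comp (gC I c) (i, a) = gr (\<lambda>l m. l = i \<or> m = i)
             (\<lambda>l. if l = i then nst (compS I c i) a else flip (compS I c l))"
    unfolding gC_def gr_def using v act by (intro lc_act' symr_comp) auto
  also have "\<dots> = gS i (\<lambda>l. if l \<in> I then Sc (c l) else Kc)"
    unfolding gS_def
  proof (rule gr_cong)
    fix l assume l: "l \<in> {1..k}"
    show "(if l = i then nst (compS I c i) a else flip (compS I c l)) =
         starS i (\<lambda>l. if l \<in> I then Sc (c l) else Kc) l"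
      using assms(4) par cntI unfolding starS_def compS_def by auto
  qed auto
  finally show "local_comp (gC I c) (i, a) = gS i (\<lambda>l. if l \<in> I then Sc (c l) else Kc)" .
  show "okS i (\<lambda>l. if l \<in> I then Sc (c l) else Kc)"
    using assms unfolding okS_def okC_def by auto
qed

lemma closure:
  assumes "F \<in> GG" "v \<in> cs_vertices k n"
  shows "local_comp F v \<in> GG"
proof -
  obtain i a where v: "v = (i, a)" "i \<in> {1..k}" "a < n i" using assms(2) unfolding cs_vertices_def by auto
  show ?thesis
  proof (cases "F \<in> {gS j f | j f. okS j f}")
    case True
    then obtain j f where F: "F = gS j f" "okS j f" by auto
    show ?thesis
    proof (cases "i = j")
      case True
      then show ?thesis using case1[OF F(2), of a] v unfolding F(1) GG_def by blast
    next
      case False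
      then have fi: "f i = Kc \<or> (\<exists>c. f i = Sc c)" using F(2) v unfolding okS_def by auto
      show ?thesis
      proof (cases "f i = Kc \<or> f i = Sc a")
        case True
        then show ?thesis using case2[OF F(2) v(2) False v(3)] v unfolding F(1) GG_def by blast
      next
        case nf: False
        then obtain c where c: "f i = Sc c" "c \<noteq> a" using fi by auto
        have "local_comp F v = F"
          unfolding F(1) v gS_def gr_def
          by (rule lc_pass[OF symr_star, where c=c]) (use c False in \<open>auto simp: starS_def\<close>)
        then show ?thesis using assms(1) by simp
      qed
    qed
  next
    case False
    then obtain I c where F: "F = gC I c" "okC I c" using assms(1) unfolding GG_def by auto
    show ?thesis
    proof (cases "i \<notin> I \<or> a = c i")
      case True
      then show ?thesis using case5[OF F(2) v(2) v(3)] v unfolding F(1) GG_def by blast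
    next
      case nf: False
      have "local_comp F v = F"
        unfolding F(1) v gC_def gr_def
        by (rule lc_pass[OF symr_comp, where c="c i"]) (use nf in \<open>auto simp: compS_def\<close>)
      then show ?thesis using assms(1) by simp
    qed
  qed
qed

lemma cs_eq: "clique_star k n r = gS r (\<lambda>_. Kc)"
proof -
  have "clique_star k n r = gr (\<lambda>l m. l = r \<or> m = r) (\<lambda>_. Kc)"
    unfolding clique_star_def gr_def gE_def Rc_def by auto
  also have "\<dots> = gS r (\<lambda>_. Kc)" unfolding gS_def
    by (rule gr_cong) (auto simp: starS_def cnt_def)
  finally show ?thesis .
qed

abbreviation orb where "orb r \<equiv> lc_orbit (cs_vertices k n) (clique_star k n r)"

lemma orbit_sub: assumes r: "r \<in> {1..k}" shows "orb r \<subseteq> GG"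
proof
  fix F assume "F \<in> orb r"
  then show "F \<in> GG"
  proof (induction rule: lc_orbit.induct)
    case refl
    have "okS r (\<lambda>_. Kc)" using r unfolding okS_def by auto
    then show ?case unfolding cs_eq GG_def by blast
  next
    case (step F v)
    then show ?case using closure by blast
  qed
qed

lemma reach_r:
  assumes "finite T"
  shows "\<forall>f. okS r f \<and> T = {l \<in> {1..k} - {r}. f l \<noteq> Kc} \<longrightarrow> gS r f \<in> orb r"
  using assms
proof (induction T rule: finite_induct)
  case empty
  show ?case
  proof (intro allI impI)
    fix f assume f: "okS r f \<and> {} = {l \<in> {1..k} - {r}. f l \<noteq> Kc}"
    have c0: "cnt r f = 0" unfolding cnt_def using f by (metis card.empty)
    have c1: "cnt r (\<lambda>_. Kc) = 0" unfolding cnt_def by simp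
    have "gS r f = gS r (\<lambda>_. Kc)" unfolding gS_def
      by (rule gr_cong) (use f c0 c1 in \<open>auto simp: starS_def\<close>)
    then show "gS r f \<in> orb r" using cs_eq lc_orbit.refl by metis
  qed
next
  case (insert x T)
  show ?case
  proof (intro allI impI)
    fix f assume f: "okS r f \<and> insert x T = {l \<in> {1..k} - {r}. f l \<noteq> Kc}"
    then have x: "x \<in> {1..k}" "x \<noteq> r" "f x \<noteq> Kc" by auto
    then obtain c where c: "f x = Sc c" "c < n x" using f unfolding okS_def by blast
    define f0 where "f0 = f(x := Kc)"
    have ok0: "okS r f0" using f unfolding okS_def f0_def by auto
    have "T = {l \<in> {1..k} - {r}. f0 l \<noteq> Kc}"
    proof (rule set_eqI)
      fix y show "y \<in> T \<longleftrightarrow> y \<in> {l \<in> {1..k} - {r}. f0 l \<noteq> Kc}"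
        using f insert(2) unfolding f0_def by (cases "y = x") auto
    qed
    then have "gS r f0 \<in> orb r" using insert(3) ok0 by blast
    moreover have "(c, x) = (c, x)" by simp
    have "local_comp (gS r f0) (x, c) = gS r (f0(x := nst (f0 x) c))"
      using case2(1)[OF ok0 x(1) x(2) c(2)] unfolding f0_def by simp
    moreover have "f0(x := nst (f0 x) c) = f" unfolding f0_def using c by auto
    moreover have "(x, c) \<in> cs_vertices k n" using x c unfolding cs_vertices_def by auto
    ultimately show "gS r f \<in> orb r" using lc_orbit.step by metis
  qed
qed

lemma reach_C:
  assumes n2: "\<And>i. i \<in> {1..k} \<Longrightarrow> n i \<ge> 2" and r: "r \<in> {1..k}" and ok: "okC I c"
  shows "gC I c \<in> orb r"
proof -
  define f where "f = (\<lambda>l. if l \<in> I then Sc (c l) else Kc)"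
  have okf: "okS r f" using ok r unfolding okS_def okC_def f_def by auto
  have "gS r f \<in> orb r" using reach_r okf by blast
  define a where "a = (if r \<in> I then c r else 0)"
  have a: "a < n r" using ok r n2[OF r] unfolding a_def okC_def by auto
  have fin: "finite I" using ok unfolding okC_def by (auto intro: finite_subset)
  have Isub: "I \<subseteq> {1..k}" using ok unfolding okC_def by auto
  have cntI: "cnt r f = card (I - {r})"
    unfolding cnt_def f_def using Isub by (intro arg_cong[where f=card]) auto
  have par: "even (card (I - {r})) \<longleftrightarrow> r \<in> I"
    using ok fin unfolding okC_def by (cases "r \<in> I") (auto simp: card_Diff_singleton)
  have "local_comp (gS r f) (r, a) = gC ({l \<in> {1..k} - {r}. f l \<noteq> Kc} \<union> (if even (cnt r f) then {r} else {}))
        (\<lambda>l. if l = r then a else ctr (f l))" by (rule case1(1)[OF okf a])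
  also have "\<dots> = gC I c" unfolding gC_def
    by (rule gr_cong) (use cntI par Isub in \<open>auto simp: compS_def f_def a_def\<close>)
  finally have "local_comp (gS r f) (r, a) = gC I c" .
  moreover have "(r, a) \<in> cs_vertices k n" using r a unfolding cs_vertices_def by auto
  ultimately show ?thesis using \<open>gS r f \<in> orb r\<close> lc_orbit.step by metis
qed

lemma reach_S:
  assumes n2: "\<And>i. i \<in> {1..k} \<Longrightarrow> n i \<ge> 2" and r: "r \<in> {1..k}" and ok: "okS j f"
  shows "gS j f \<in> orb r"
proof -
  define T where "T = {l \<in> {1..k} - {j}. f l \<noteq> Kc}"
  define I where "I = T \<union> (if even (card T) then {j} else {})"
  define c where "c = (\<lambda>l. if l = j then 0 else ctr (f l))"
  have j: "j \<in> {1..k}" using ok unfolding okS_def by auto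
  have T: "finite T" "j \<notin> T" "T \<subseteq> {1..k}" unfolding T_def by auto
  have okc: "okC I c" unfolding okC_def
  proof (intro conjI ballI)
    show "I \<subseteq> {1..k}" using T j unfolding I_def by auto
    show "odd (card I)" using T unfolding I_def by (cases "even (card T)") auto
  next
    fix i assume i: "i \<in> I"
    show "c i < n i"
    proof (cases "i = j")
      case True then show ?thesis using n2[OF j] unfolding c_def by simp
    next
      case False
      then have "i \<in> {1..k} - {j}" "f i \<noteq> Kc" using i unfolding I_def T_def by (auto split: if_splits)
      then obtain d where "d < n i" "f i = Sc d" using ok unfolding okS_def by blast
      then show ?thesis using False unfolding c_def by simp
    qed
  qed
  have "gC I c \<in> orb r" by (rule reach_C[OF n2 r okc])
  have v: "(j, 0) \<in> cs_vertices k n" using j n2[OF j] unfolding cs_vertices_def by auto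
  have "local_comp (gC I c) (j, 0) = gS j (\<lambda>l. if l \<in> I then Sc (c l) else Kc)"
    by (rule case5(1)[OF okc j]) (use n2[OF j] in \<open>auto simp: c_def\<close>)
  also have "\<dots> = gS j f"
  proof -
    have IT: "I - {j} = T" using T unfolding I_def by auto
    have cc: "cnt j (\<lambda>l. if l \<in> I then Sc (c l) else Kc) = cnt j f"
      unfolding cnt_def using IT unfolding T_def by (intro arg_cong[where f=card]) auto
    show ?thesis unfolding gS_def
    proof (rule gr_cong)
      fix l assume l: "l \<in> {1..k}"
      show "starS j (\<lambda>l. if l \<in> I then Sc (c l) else Kc) l = starS j f l"
      proof (cases "l = j")
        case True then show ?thesis using cc unfolding starS_def by simp
      next
        case False
        then have "l \<in> I \<longleftrightarrow> f l \<noteq> Kc" using l unfolding I_def T_def by auto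
        moreover have "f l \<noteq> Kc \<Longrightarrow> Sc (ctr (f l)) = f l"
          using ok l False unfolding okS_def by auto
        ultimately show ?thesis using False unfolding starS_def c_def by auto
      qed
    qed auto
  qed
  finally show ?thesis using \<open>gC I c \<in> orb r\<close> v lc_orbit.step by metis
qed

definition valid :: "(nat \<Rightarrow> st) \<Rightarrow> bool" where
  "valid s \<longleftrightarrow> (\<forall>l\<in>{1..k}. \<forall>c. s l = Sc c \<longrightarrow> c < n l)"

lemma att_ex: "valid s \<Longrightarrow> l \<in> {1..k} \<Longrightarrow> n l \<ge> 2 \<Longrightarrow> \<exists>b<n l. att (s l) b"
  unfolding valid_def by (cases "s l") (auto intro: exI[where x=0])

lemma st_det:
  assumes "n l \<ge> 2" "\<And>c. t1 = Sc c \<Longrightarrow> c < n l" "\<And>c. t2 = Sc c \<Longrightarrow> c < n l"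
    and "\<And>b. b < n l \<Longrightarrow> att t1 b = att t2 b"
    and "\<And>b b'. b < n l \<Longrightarrow> b' < n l \<Longrightarrow> b \<noteq> b' \<Longrightarrow> inner t1 b b' = inner t2 b b'"
  shows "t1 = t2"
proof -
  have other: "\<exists>b<n l. b \<noteq> c" for c using assms(1) by (cases "c = 0") (auto intro: exI[where x=1] exI[where x=0])
  show ?thesis
  proof (cases t1)
    case Kc
    then show ?thesis
    proof (cases t2)
      case Ec then show ?thesis using Kc assms(1) assms(5)[of 0 1] by auto
    next
      case (Sc c) then obtain b where "b < n l" "b \<noteq> c" using other by blast
      then show ?thesis using Kc Sc assms(4)[of b] by auto
    qed auto
  next
    case Ec
    then show ?thesis
    proof (cases t2)
      case Kc then show ?thesis using Ec assms(1) assms(5)[of 0 1] by auto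
    next
      case (Sc c) then obtain b where "b < n l" "b \<noteq> c" using other by blast
      then show ?thesis using Ec Sc assms(4)[of b] by auto
    qed auto
  next
    case (Sc c)
    then obtain b where b: "b < n l" "b \<noteq> c" using other by blast
    show ?thesis
    proof (cases t2)
      case Kc then show ?thesis using Sc b assms(4)[of b] by auto
    next
      case Ec then show ?thesis using Sc b assms(4)[of b] by auto
    next
      case (Sc c') then show ?thesis using \<open>t1 = Sc c\<close> assms(2,3) assms(4)[of c] by auto
    qed
  qed
qed

lemma gr_decode:
  assumes eq: "gr H1 s1 = gr H2 s2" and sym: "symr H1" "symr H2"
    and n2a: "\<forall>i\<in>{1..k}. n i \<ge> 2" and val: "valid s1" "valid s2"
    and nb1a: "\<forall>l\<in>{1..k}. \<exists>m\<in>{1..k}. m \<noteq> l \<and> H1 l m"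
  shows "\<And>l m. l \<in> {1..k} \<Longrightarrow> m \<in> {1..k} \<Longrightarrow> l \<noteq> m \<Longrightarrow> H1 l m = H2 l m"
    and "\<And>l. l \<in> {1..k} \<Longrightarrow> s1 l = s2 l"
proof -
  have n2: "\<And>i. i \<in> {1..k} \<Longrightarrow> n i \<ge> 2" using n2a by auto
  have nb1: "\<And>l. l \<in> {1..k} \<Longrightarrow> \<exists>m\<in>{1..k}. m \<noteq> l \<and> H1 l m" using nb1a by auto
  have R: "Rc H1 s1 x y = Rc H2 s2 x y" if "x \<in> cs_vertices k n" "y \<in> cs_vertices k n" "x \<noteq> y" for x y
    using eq mem_gE[OF symr_Rc[OF sym(1)] that(3), of "cs_vertices k n" s1]
      mem_gE[OF symr_Rc[OF sym(2)] that(3), of "cs_vertices k n" s2] that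
    unfolding gr_def by auto
  have Hc: "H l m \<longleftrightarrow> (\<exists>b<n l. \<exists>b'<n m. Rc H s (l, b) (m, b'))"
    if "l \<in> {1..k}" "m \<in> {1..k}" "l \<noteq> m" "valid s" for H s l m
    using att_ex[OF that(4) that(1) n2[OF that(1)]] att_ex[OF that(4) that(2) n2[OF that(2)]] that(3)
    unfolding Rc_def by auto
  show H: "H1 l m = H2 l m" if "l \<in> {1..k}" "m \<in> {1..k}" "l \<noteq> m" for l m
    using Hc[OF that val(1), of H1] Hc[OF that val(2), of H2] R that
    unfolding cs_vertices_def by auto
  show "s1 l = s2 l" if l: "l \<in> {1..k}" for l
  proof -
    obtain m where m: "m \<in> {1..k}" "m \<noteq> l" "H1 l m" using nb1[OF l] by blast
    have m2: "H2 l m" using H[OF l m(1)] m by auto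
    have attc: "att (s l) b \<longleftrightarrow> (\<exists>b'<n m. Rc H s (l, b) (m, b'))"
      if "H l m" "valid s" for H s b
      using att_ex[OF that(2) m(1) n2[OF m(1)]] that(1) m(2) unfolding Rc_def by auto
    show ?thesis
    proof (rule st_det[OF n2[OF l]])
      show "\<And>c. s1 l = Sc c \<Longrightarrow> c < n l" "\<And>c. s2 l = Sc c \<Longrightarrow> c < n l"
        using val l unfolding valid_def by auto
      show "att (s1 l) b = att (s2 l) b" if "b < n l" for b
        using attc[where H=H1 and s=s1 and b=b, OF m(3) val(1)] attc[where H=H2 and s=s2 and b=b, OF m2 val(2)] R that l m
        unfolding cs_vertices_def by auto
      show "inner (s1 l) b b' = inner (s2 l) b b'" if "b < n l" "b' < n l" "b \<noteq> b'" for b b'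
        using R[of "(l, b)" "(l, b')"] that l unfolding cs_vertices_def Rc_def by auto
    qed
  qed
qed

lemma three: "k \<ge> 3 \<Longrightarrow> \<exists>m\<in>{1..k}. m \<noteq> a \<and> m \<noteq> b"
proof -
  assume "k \<ge> 3"
  then have "{1, 2, 3} \<subseteq> {1..k}" by auto
  moreover have "\<exists>m\<in>{1, 2, 3::nat}. m \<noteq> a \<and> m \<noteq> b" by auto
  ultimately show ?thesis by blast
qed

lemma valid_S: assumes "okS j f" shows "valid (starS j f)"
  unfolding valid_def
proof (intro ballI allI impI)
  fix l c assume l: "l \<in> {1..k}" and c: "starS j f l = Sc c"
  then have "l \<noteq> j" "f l = Sc c" unfolding starS_def by (auto split: if_splits)
  then show "c < n l" using assms l unfolding okS_def by force
qed

lemma valid_C: "okC I c \<Longrightarrow> valid (compS I c)"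
  unfolding valid_def okC_def compS_def by auto

lemma nb_S: "k \<ge> 3 \<Longrightarrow> okS j f \<Longrightarrow> \<forall>l\<in>{1..k}. \<exists>m\<in>{1..k}. m \<noteq> l \<and> (l = j \<or> m = j)"
proof
  fix l assume "k \<ge> 3" "okS j f" "l \<in> {1..k}"
  then show "\<exists>m\<in>{1..k}. m \<noteq> l \<and> (l = j \<or> m = j)"
    using three[of j j] unfolding okS_def by (cases "l = j") auto
qed

lemma nb_C: "k \<ge> 3 \<Longrightarrow> \<forall>l\<in>{1..k}. \<exists>m\<in>{1..k}. m \<noteq> l \<and> True"
  using three by auto

lemma inj_S:
  assumes k3: "k \<ge> 3" and n2: "\<And>i. i \<in> {1..k} \<Longrightarrow> n i \<ge> 2"
    and ok: "okS j f" "okS j' f'" and eq: "gS j f = gS j' f'"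
  shows "j = j'" "\<And>l. l \<in> {1..k} - {j} \<Longrightarrow> f l = f' l"
proof -
  have n2a: "\<forall>i\<in>{1..k}. n i \<ge> 2" using n2 by auto
  have eq': "gr (\<lambda>l m. l = j \<or> m = j) (starS j f) = gr (\<lambda>l m. l = j' \<or> m = j') (starS j' f')"
    using eq unfolding gS_def .
  note D = gr_decode[OF eq' symr_star symr_star n2a valid_S[OF ok(1)] valid_S[OF ok(2)] nb_S[OF k3 ok(1)]]
  have j: "j \<in> {1..k}" "j' \<in> {1..k}" using ok unfolding okS_def by auto
  show jj: "j = j'"
  proof (rule ccontr)
    assume "j \<noteq> j'"
    obtain m where m: "m \<in> {1..k}" "m \<noteq> j" "m \<noteq> j'" using three[OF k3] by blast
    show False using D(1)[OF j(1) m(1)] m \<open>j \<noteq> j'\<close> by auto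
  qed
  show "f l = f' l" if "l \<in> {1..k} - {j}" for l
    using D(2)[of l] that jj unfolding starS_def by auto
qed

lemma inj_SC:
  assumes k3: "k \<ge> 3" and n2: "\<And>i. i \<in> {1..k} \<Longrightarrow> n i \<ge> 2"
    and ok: "okS j f" "okC I c"
  shows "gS j f \<noteq> gC I c"
proof
  assume eq: "gS j f = gC I c"
  have n2a: "\<forall>i\<in>{1..k}. n i \<ge> 2" using n2 by auto
  have eq': "gr (\<lambda>l m. l = j \<or> m = j) (starS j f) = gr (\<lambda>l m. True) (compS I c)"
    using eq unfolding gS_def gC_def .
  note D = gr_decode[OF eq' symr_star symr_comp n2a valid_S[OF ok(1)] valid_C[OF ok(2)] nb_S[OF k3 ok(1)]]
  have j: "j \<in> {1..k}" using ok unfolding okS_def by auto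
  obtain l where l: "l \<in> {1..k}" "l \<noteq> j" using three[OF k3] by blast
  obtain m where m: "m \<in> {1..k}" "m \<noteq> j" "m \<noteq> l" using three[OF k3] by blast
  show False using D(1)[OF l(1) m(1)] l m by auto
qed

lemma inj_C:
  assumes k3: "k \<ge> 3" and n2: "\<And>i. i \<in> {1..k} \<Longrightarrow> n i \<ge> 2"
    and ok: "okC I c" "okC I' c'" and eq: "gC I c = gC I' c'"
  shows "I = I'" "\<And>i. i \<in> I \<Longrightarrow> c i = c' i"
proof -
  have n2a: "\<forall>i\<in>{1..k}. n i \<ge> 2" using n2 by auto
  have eq': "gr (\<lambda>l m. True) (compS I c) = gr (\<lambda>l m. True) (compS I' c')"
    using eq unfolding gC_def .
  note D = gr_decode[OF eq' symr_comp symr_comp n2a valid_C[OF ok(1)] valid_C[OF ok(2)] nb_C[OF k3]]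
  have sub: "I \<subseteq> {1..k}" "I' \<subseteq> {1..k}" using ok unfolding okC_def by auto
  show II: "I = I'"
  proof (rule set_eqI)
    fix i show "i \<in> I \<longleftrightarrow> i \<in> I'"
      using D(2)[of i] sub unfolding compS_def by (cases "i \<in> {1..k}") (auto split: if_splits)
  qed
  show "c i = c' i" if "i \<in> I" for i
    using D(2)[of i] sub that II unfolding compS_def by auto
qed

definition P1 where
  "P1 = Sigma {1..k} (\<lambda>j. PiE ({1..k} - {j}) (\<lambda>l. insert Kc (Sc ` {..<n l})))"
definition P2 where
  "P2 = Sigma {I. I \<subseteq> {1..k} \<and> odd (card I)} (\<lambda>I. PiE I (\<lambda>i. {..<n i}))"

lemma P1_ok: "(j, f) \<in> P1 \<Longrightarrow> okS j f"
  unfolding P1_def okS_def by (auto simp: PiE_iff)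

lemma P2_ok: "(I, c) \<in> P2 \<Longrightarrow> okC I c"
  unfolding P2_def okC_def by (auto simp: PiE_iff)

lemma S_restrict:
  assumes "okS j f"
  shows "gS j f = gS j (restrict f ({1..k} - {j}))" "(j, restrict f ({1..k} - {j})) \<in> P1"
proof -
  have "cnt j f = cnt j (restrict f ({1..k} - {j}))" unfolding cnt_def
    by (intro arg_cong[where f=card]) auto
  then show "gS j f = gS j (restrict f ({1..k} - {j}))" unfolding gS_def
    by (intro gr_cong) (auto simp: starS_def)
  have "f l \<in> insert Kc (Sc ` {..<n l})" if "l \<in> {1..k} - {j}" for l
    using assms that unfolding okS_def by blast
  then have "restrict f ({1..k} - {j}) \<in> PiE ({1..k} - {j}) (\<lambda>l. insert Kc (Sc ` {..<n l}))"
    by (simp add: restrict_PiE_iff)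
  moreover have "j \<in> {1..k}" using assms unfolding okS_def by blast
  ultimately show "(j, restrict f ({1..k} - {j})) \<in> P1"
    unfolding P1_def by blast
qed

lemma C_restrict:
  assumes "okC I c"
  shows "gC I c = gC I (restrict c I)" "(I, restrict c I) \<in> P2"
proof -
  show "gC I c = gC I (restrict c I)" unfolding gC_def
    by (intro gr_cong) (auto simp: compS_def)
  have "restrict c I \<in> PiE I (\<lambda>i. {..<n i})"
    using assms unfolding okC_def by (simp add: restrict_PiE_iff)
  then show "(I, restrict c I) \<in> P2"
    using assms unfolding P2_def okC_def by blast
qed

lemma GG_eq: "GG = (\<lambda>(j, f). gS j f) ` P1 \<union> (\<lambda>(I, c). gC I c) ` P2"
proof
  show "GG \<subseteq> (\<lambda>(j, f). gS j f) ` P1 \<union> (\<lambda>(I, c). gC I c) ` P2"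
  proof
    fix F assume "F \<in> GG"
    then consider j f where "F = gS j f" "okS j f" | I c where "F = gC I c" "okC I c"
      unfolding GG_def by blast
    then show "F \<in> (\<lambda>(j, f). gS j f) ` P1 \<union> (\<lambda>(I, c). gC I c) ` P2"
    proof cases
      case 1
      then have "F = (\<lambda>(j, f). gS j f) (j, restrict f ({1..k} - {j}))"
        using S_restrict(1)[OF 1(2)] by simp
      then have "F \<in> (\<lambda>(j, f). gS j f) ` P1" using S_restrict(2)[OF 1(2)] by (rule image_eqI)
      then show ?thesis by (rule UnI1)
    next
      case 2
      then have "F = (\<lambda>(I, c). gC I c) (I, restrict c I)"
        using C_restrict(1)[OF 2(2)] by simp
      then have "F \<in> (\<lambda>(I, c). gC I c) ` P2" using C_restrict(2)[OF 2(2)] by (rule image_eqI)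
      then show ?thesis by (rule UnI2)
    qed
  qed
  show "(\<lambda>(j, f). gS j f) ` P1 \<union> (\<lambda>(I, c). gC I c) ` P2 \<subseteq> GG"
  proof
    fix F assume "F \<in> (\<lambda>(j, f). gS j f) ` P1 \<union> (\<lambda>(I, c). gC I c) ` P2"
    then show "F \<in> GG"
    proof
      assume "F \<in> (\<lambda>(j, f). gS j f) ` P1"
      then obtain j f where "(j, f) \<in> P1" "F = gS j f" by auto
      then show ?thesis using P1_ok unfolding GG_def by blast
    next
      assume "F \<in> (\<lambda>(I, c). gC I c) ` P2"
      then obtain I c where "(I, c) \<in> P2" "F = gC I c" by auto
      then show ?thesis using P2_ok unfolding GG_def by blast
    qed
  qed
qed

lemma finP1: "finite P1" unfolding P1_def by (intro finite_SigmaI finite_PiE) auto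

lemma finIs: "finite {I. I \<subseteq> {1..k} \<and> odd (card I)}"
  by (rule finite_subset[of _ "Pow {1..k}"]) auto

lemma finP2: "finite P2"
proof -
  have "\<forall>I\<in>{I. I \<subseteq> {1..k} \<and> odd (card I)}. finite (PiE I (\<lambda>i. {..<n i}))"
  proof
    fix I assume "I \<in> {I. I \<subseteq> {1..k} \<and> odd (card I)}"
    then have "I \<subseteq> {1..k}" by simp
    then have "finite I" by (rule finite_subset) simp
    then show "finite (PiE I (\<lambda>i. {..<n i}))" by (simp add: finite_PiE)
  qed
  then show ?thesis unfolding P2_def by (intro finite_SigmaI[OF finIs]) blast
qed

lemma card_GG:
  assumes k3: "k \<ge> 3" and n2: "\<And>i. i \<in> {1..k} \<Longrightarrow> n i \<ge> 2"
  shows "card GG = (\<Sum>I \<in> {I. I \<subseteq> {1..k} \<and> odd (card I)}. \<Prod>i\<in>I. n i)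
         + (\<Sum>j = 1..k. \<Prod>i \<in> {1..k} - {j}. n i + 1)"
proof -
  have inj1: "inj_on (\<lambda>(j, f). gS j f) P1"
  proof (rule inj_onI)
    fix x y assume x: "x \<in> P1" and y: "y \<in> P1" and e: "(\<lambda>(j, f). gS j f) x = (\<lambda>(j, f). gS j f) y"
    obtain j f j' f' where xy: "x = (j, f)" "y = (j', f')" by fastforce
    have ok: "okS j f" "okS j' f'" using x y P1_ok xy by auto
    have eq: "gS j f = gS j' f'" using e xy by simp
    have jj: "j = j'" using inj_S(1)[OF k3 n2 ok eq] .
    have fP: "f \<in> PiE ({1..k} - {j}) (\<lambda>l. insert Kc (Sc ` {..<n l}))" using x xy unfolding P1_def by blast
    have fP': "f' \<in> PiE ({1..k} - {j}) (\<lambda>l. insert Kc (Sc ` {..<n l}))" using y xy jj unfolding P1_def by blast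
    have "f = f'" using PiE_ext[OF fP fP'] inj_S(2)[OF k3 n2 ok eq] by blast
    then show "x = y" using xy jj by simp
  qed
  have inj2: "inj_on (\<lambda>(I, c). gC I c) P2"
  proof (rule inj_onI)
    fix x y assume x: "x \<in> P2" and y: "y \<in> P2" and e: "(\<lambda>(I, c). gC I c) x = (\<lambda>(I, c). gC I c) y"
    obtain I c I' c' where xy: "x = (I, c)" "y = (I', c')" by fastforce
    have ok: "okC I c" "okC I' c'" using x y P2_ok xy by auto
    have eq: "gC I c = gC I' c'" using e xy by simp
    have II: "I = I'" using inj_C(1)[OF k3 n2 ok eq] .
    have cP: "c \<in> PiE I (\<lambda>i. {..<n i})" using x xy unfolding P2_def by blast
    have cP': "c' \<in> PiE I (\<lambda>i. {..<n i})" using y xy II unfolding P2_def by blast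
    have "c = c'" using PiE_ext[OF cP cP'] inj_C(2)[OF k3 n2 ok eq] by blast
    then show "x = y" using xy II by simp
  qed
  have disj: "(\<lambda>(j, f). gS j f) ` P1 \<inter> (\<lambda>(I, c). gC I c) ` P2 = {}"
  proof (rule equals0I)
    fix F assume "F \<in> (\<lambda>(j, f). gS j f) ` P1 \<inter> (\<lambda>(I, c). gC I c) ` P2"
    then obtain j f I c where "(j, f) \<in> P1" "(I, c) \<in> P2" "gS j f = gC I c" by auto
    then show False using inj_SC[OF k3 n2] P1_ok P2_ok by blast
  qed
  have "card GG = card ((\<lambda>(j, f). gS j f) ` P1) + card ((\<lambda>(I, c). gC I c) ` P2)"
    unfolding GG_eq using disj finP1 finP2 by (intro card_Un_disjoint finite_imageI)
  also have "\<dots> = card P1 + card P2" using card_image[OF inj1] card_image[OF inj2] by simp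
  also have "card P1 = (\<Sum>j = 1..k. \<Prod>i \<in> {1..k} - {j}. n i + 1)"
  proof -
    have ci: "card (insert Kc (Sc ` {..<n l})) = n l + 1" for l
    proof -
      have "card (Sc ` {..<n l}) = n l" by (simp add: card_image inj_on_def)
      moreover have "Kc \<notin> Sc ` {..<n l}" by auto
      ultimately show ?thesis by simp
    qed
    have "card P1 = (\<Sum>j = 1..k. card (PiE ({1..k} - {j}) (\<lambda>l. insert Kc (Sc ` {..<n l}))))"
      unfolding P1_def by (rule card_SigmaI) (auto intro!: finite_PiE)
    also have "\<dots> = (\<Sum>j = 1..k. \<Prod>i \<in> {1..k} - {j}. n i + 1)"
      by (rule sum.cong[OF HOL.refl], subst card_PiE) (simp_all add: ci)
    finally show ?thesis .
  qed
  also have "card P2 = (\<Sum>I \<in> {I. I \<subseteq> {1..k} \<and> odd (card I)}. \<Prod>i\<in>I. n i)"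
  proof -
    have finI: "finite I" if "I \<in> {I. I \<subseteq> {1..k} \<and> odd (card I)}" for I
    proof -
      have "I \<subseteq> {1..k}" using that by simp
      then show "finite I" by (rule finite_subset) simp
    qed
    have "card P2 = (\<Sum>I \<in> {I. I \<subseteq> {1..k} \<and> odd (card I)}. card (PiE I (\<lambda>i. {..<n i})))"
      unfolding P2_def
    proof (rule card_SigmaI[OF finIs], rule ballI)
      fix I assume "I \<in> {I. I \<subseteq> {1..k} \<and> odd (card I)}"
      then have "finite I" by (rule finI)
      then show "finite (PiE I (\<lambda>i. {..<n i}))" by (rule finite_PiE) simp
    qed
    also have "\<dots> = (\<Sum>I \<in> {I. I \<subseteq> {1..k} \<and> odd (card I)}. \<Prod>i\<in>I. n i)"
      proof (rule sum.cong[OF HOL.refl])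
      fix I assume "I \<in> {I. I \<subseteq> {1..k} \<and> odd (card I)}"
      then have "finite I" by (rule finI)
      then show "card (PiE I (\<lambda>i. {..<n i})) = (\<Prod>i\<in>I. n i)" by (simp add: card_PiE)
    qed
    finally show ?thesis .
  qed
  finally show ?thesis by (simp add: add.commute)
qed

lemma main_count:
  assumes k3: "k \<ge> 3" and n2: "\<And>i. i \<in> {1..k} \<Longrightarrow> n i \<ge> 2" and r: "r \<in> {1..k}"
  shows "card (orb r) = (\<Sum>I \<in> {I. I \<subseteq> {1..k} \<and> odd (card I)}. \<Prod>i\<in>I. n i)
         + (\<Sum>j = 1..k. \<Prod>i \<in> {1..k} - {j}. n i + 1)"
proof -
  have "orb r = GG"
  proof
    show "orb r \<subseteq> GG" by (rule orbit_sub[OF r])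
    show "GG \<subseteq> orb r" unfolding GG_def using reach_S[OF n2 r] reach_C[OF n2 r] by blast
  qed
  then show ?thesis using card_GG[OF k3 n2] by simp
qed

end

theorem theorem8:
  fixes k r :: nat and n :: "nat \<Rightarrow> nat"
  assumes "k \<ge> 3" and "\<And>i. i \<in> {1..k} \<Longrightarrow> n i \<ge> 2" and "r \<in> {1..k}"
  shows "card (lc_orbit (cs_vertices k n) (clique_star k n r)) =
           (\<Sum>I \<in> {I. I \<subseteq> {1..k} \<and> odd (card I)}. \<Prod>i\<in>I. n i)
         + (\<Sum>j = 1..k. \<Prod>i \<in> {1..k} - {j}. n i + 1)"
  using main_count[OF assms] .

end
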